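(* Let $M,N\ge1$, let $T_1,\dots,T_N\in\mathcal{L}(\ell^\infty_M,\mathbb{R})$, let $\mathscr{T}=\{T_n:1\le n\le N\}$, and let $A:\ell^\infty_M\to\ell^\infty_N$ be given by $Ax=(T_nx)_{n=1}^N$. Then $\mathcal{R}^2(\mathscr{T})=\pi_2(A)$.
   Context: $\ell^\infty_M$ is $\mathbb{R}^M$ with max norm, viewed as a Banach lattice with coordinatewise order. The $\ell^2$-bound $\mathcal{R}^2(\mathscr{T})$ is the least $C$ such that $\|(\sum_{i=1}^k|S_ix_i|^2)^{1/2}\|\le C\|(\sum_{i=1}^k|x_i|^2)^{1/2}\|$ for all $k$, all $S_1,\dots,S_k\in\mathscr{T}$ (not necessarily distinct) and all $x_1,\dots,x_k$. For $A\in\mathcal{L}(X,Y)$, $\pi_2(A)$ (the 2-summing norm) is the least $C$ such that $(\sum_{n=1}^k\|Ax_n\|^2)^{1/2}\le C\sup\{(\sum_{n=1}^k|\langle x_n,x^*\rangle|^2)^{1/2}:\|x^*\|_{X^*}\le1\}$ for all $k$ and $x_1,\dots,x_k\in X$. *)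

theory Defs
  imports Complex_Main
begin

text \<open>The space l-infinity over a finite index type 'm (M = CARD('m) >= 1):
  vectors are functions 'm => real with the max norm.\<close>

definition linf_norm :: "('m::finite \<Rightarrow> real) \<Rightarrow> real" where
  "linf_norm x = Max (range (\<lambda>j. \<bar>x j\<bar>))"

definition lin_functional :: "(('m::finite \<Rightarrow> real) \<Rightarrow> real) \<Rightarrow> bool" where
  "lin_functional T \<longleftrightarrow>
     (\<forall>x y. T (\<lambda>j. x j + y j) = T x + T y) \<and> (\<forall>c x. T (\<lambda>j. c * x j) = c * T x)"

text \<open>The l^2-bound of a family of operators from l-infinity_M to the Banach lattice R
  (where |.| is the absolute value and the norm is the absolute value).\<close>

definition R2bound :: "(('m::finite \<Rightarrow> real) \<Rightarrow> real) set \<Rightarrow> real" where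
  "R2bound \<T> = Inf {C. \<forall>(k::nat) (S :: nat \<Rightarrow> ('m \<Rightarrow> real) \<Rightarrow> real) (xs :: nat \<Rightarrow> 'm \<Rightarrow> real).
       (\<forall>i<k. S i \<in> \<T>) \<longrightarrow>
       \<bar>sqrt (\<Sum>i<k. \<bar>S i (xs i)\<bar>^2)\<bar> \<le> C * linf_norm (\<lambda>j. sqrt (\<Sum>i<k. \<bar>xs i j\<bar>^2))}"

definition dual_ball :: "(('m::finite \<Rightarrow> real) \<Rightarrow> real) set" where
  "dual_ball = {f. lin_functional f \<and> (\<forall>x. \<bar>f x\<bar> \<le> linf_norm x)}"

definition weak_l2 :: "nat \<Rightarrow> (nat \<Rightarrow> 'm::finite \<Rightarrow> real) \<Rightarrow> real" where
  "weak_l2 k xs = Sup ((\<lambda>f. sqrt (\<Sum>n<k. \<bar>f (xs n)\<bar>^2)) ` dual_ball)"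

definition pi2 :: "(('m::finite \<Rightarrow> real) \<Rightarrow> ('n::finite \<Rightarrow> real)) \<Rightarrow> real" where
  "pi2 A = Inf {C. \<forall>(k::nat) (xs :: nat \<Rightarrow> 'm \<Rightarrow> real).
       sqrt (\<Sum>n<k. (linf_norm (A (xs n)))^2) \<le> C * weak_l2 k xs}"

end

theory Submission
  imports Defs "HOL-Analysis.L2_Norm"
begin

lemma linf_ge: "\<bar>x j\<bar> \<le> linf_norm x"
  unfolding linf_norm_def by (rule Max_ge) auto

lemma linf_attain: "\<exists>j. linf_norm x = \<bar>x j\<bar>"
proof -
  have "linf_norm x \<in> range (\<lambda>j. \<bar>x j\<bar>)"
    unfolding linf_norm_def by (rule Max_in) auto
  then show ?thesis by auto
qed

lemma linf_le: "(\<And>j. \<bar>x j\<bar> \<le> c) \<Longrightarrow> linf_norm x \<le> c"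
  unfolding linf_norm_def by (subst Max_le_iff) auto

lemma lin_sum:
  assumes "lin_functional f"
  fixes k :: nat
  shows "f (\<lambda>j. \<Sum>n<k. c n * x n j) = (\<Sum>n<k. c n * f (x n))"
proof (induction k)
  case 0
  have "f (\<lambda>j. 0 * x 0 j) = 0 * f (x 0)" using assms unfolding lin_functional_def by blast
  then show ?case by simp
next
  case (Suc k)
  have "f (\<lambda>j. \<Sum>n<Suc k. c n * x n j) = f (\<lambda>j. (\<Sum>n<k. c n * x n j) + c k * x k j)" by simp
  also have "\<dots> = f (\<lambda>j. \<Sum>n<k. c n * x n j) + f (\<lambda>j. c k * x k j)"
  proof -
    have add: "\<And>x y. f (\<lambda>j. x j + y j) = f x + f y" using assms unfolding lin_functional_def by blast
    show ?thesis using add[of "\<lambda>j. \<Sum>n<k. c n * x n j" "\<lambda>j. c k * x k j"] by simp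
  qed
  also have "f (\<lambda>j. c k * x k j) = c k * f (x k)"
    using assms unfolding lin_functional_def by blast
  finally show ?case using Suc by simp
qed

lemma weak_l2_eq:
  "weak_l2 k xs = linf_norm (\<lambda>j. sqrt (\<Sum>i<k. \<bar>xs i j\<bar>^2))"
proof -
  define L where "L = linf_norm (\<lambda>j. sqrt (\<Sum>i<k. \<bar>xs i j\<bar>^2))"
  obtain j0 where j0: "L = \<bar>sqrt (\<Sum>i<k. \<bar>xs i j0\<bar>^2)\<bar>"
    using linf_attain unfolding L_def by blast
  have colL: "sqrt (\<Sum>i<k. (xs i j)^2) \<le> L" for j
    using linf_ge[of "\<lambda>j. sqrt (\<Sum>i<k. \<bar>xs i j\<bar>^2)" j] unfolding L_def by simp
  have ev: "(\<lambda>x. x j0) \<in> dual_ball"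
    unfolding dual_ball_def lin_functional_def using linf_ge by auto
  have bound: "sqrt (\<Sum>n<k. \<bar>f (xs n)\<bar>^2) \<le> L" if f: "f \<in> dual_ball" for f
  proof -
    have lf: "lin_functional f" and nb: "\<And>x. \<bar>f x\<bar> \<le> linf_norm x" using f unfolding dual_ball_def by auto
    define c where "c n = f (xs n)" for n
    define s where "s = sqrt (\<Sum>n<k. (c n)^2)"
    have s0: "s \<ge> 0" unfolding s_def by (simp add: sum_nonneg)
    have "s^2 = (\<Sum>n<k. c n * f (xs n))" unfolding s_def c_def by (simp add: power2_eq_square sum_nonneg)
    also have "\<dots> = f (\<lambda>j. \<Sum>n<k. c n * xs n j)" using lin_sum[OF lf] by simp
    also have "\<dots> \<le> \<bar>f (\<lambda>j. \<Sum>n<k. c n * xs n j)\<bar>" by simp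
    also have "\<dots> \<le> linf_norm (\<lambda>j. \<Sum>n<k. c n * xs n j)" by (rule nb)
    also have "\<dots> \<le> s * L"
    proof (rule linf_le)
      fix j
      have "\<bar>\<Sum>n<k. c n * xs n j\<bar> \<le> (\<Sum>n<k. \<bar>c n\<bar> * \<bar>xs n j\<bar>)"
        by (rule order_trans[OF sum_abs]) (simp add: abs_mult)
      also have "\<dots> \<le> L2_set c {..<k} * L2_set (\<lambda>n. xs n j) {..<k}" by (rule L2_set_mult_ineq)
      also have "\<dots> = s * sqrt (\<Sum>i<k. (xs i j)^2)" unfolding L2_set_def s_def by simp
      also have "\<dots> \<le> s * L" using colL[of j] s0 by (simp add: mult_left_mono)
      finally show "\<bar>\<Sum>n<k. c n * xs n j\<bar> \<le> s * L" .
    qed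
    finally have "s^2 \<le> s * L" .
    moreover have L0: "L \<ge> 0" by (rule order_trans[OF _ colL[of j0]]) (simp add: sum_nonneg)
    ultimately have "s \<le> L"
    proof (cases "s = 0")
      case True then show ?thesis using L0 by simp
    next
      case False
      with s0 have "s > 0" by simp
      with \<open>s^2 \<le> s * L\<close> show ?thesis by (simp add: power2_eq_square)
    qed
    then show ?thesis unfolding s_def c_def by simp
  qed
  have "weak_l2 k xs = L"
    unfolding weak_l2_def
  proof (rule cSup_eq_maximum)
    show "L \<in> (\<lambda>f. sqrt (\<Sum>n<k. \<bar>f (xs n)\<bar>^2)) ` dual_ball"
      using ev j0 by (intro image_eqI[of _ _ "\<lambda>x. x j0"]) (auto simp: sum_nonneg)
    show "\<And>y. y \<in> (\<lambda>f. sqrt (\<Sum>n<k. \<bar>f (xs n)\<bar>^2)) ` dual_ball \<Longrightarrow> y \<le> L"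
      using bound by auto
  qed
  then show ?thesis unfolding L_def .
qed

theorem mainTheorem12:
  fixes T :: "'n::finite \<Rightarrow> ('m::finite \<Rightarrow> real) \<Rightarrow> real"
  assumes "\<And>n. lin_functional (T n)"
  shows "R2bound (range T) = pi2 (\<lambda>x. \<lambda>n. T n x)"
proof -
  have "{C. \<forall>(k::nat) (S :: nat \<Rightarrow> ('m \<Rightarrow> real) \<Rightarrow> real) (xs :: nat \<Rightarrow> 'm \<Rightarrow> real).
       (\<forall>i<k. S i \<in> range T) \<longrightarrow>
       \<bar>sqrt (\<Sum>i<k. \<bar>S i (xs i)\<bar>^2)\<bar> \<le> C * linf_norm (\<lambda>j. sqrt (\<Sum>i<k. \<bar>xs i j\<bar>^2))}
    = {C. \<forall>(k::nat) (xs :: nat \<Rightarrow> 'm \<Rightarrow> real).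
       sqrt (\<Sum>n<k. (linf_norm ((\<lambda>x. \<lambda>n. T n x) (xs n)))^2) \<le> C * weak_l2 k xs}"
    (is "?R = ?P")
  proof (intro Collect_cong iffI allI impI)
    fix C and k :: nat and xs :: "nat \<Rightarrow> 'm \<Rightarrow> real"
    assume R: "\<forall>(k::nat) (S :: nat \<Rightarrow> ('m \<Rightarrow> real) \<Rightarrow> real) (xs :: nat \<Rightarrow> 'm \<Rightarrow> real). (\<forall>i<k. S i \<in> range T) \<longrightarrow>
       \<bar>sqrt (\<Sum>i<k. \<bar>S i (xs i)\<bar>^2)\<bar> \<le> C * linf_norm (\<lambda>j. sqrt (\<Sum>i<k. \<bar>xs i j\<bar>^2))"
    define ns where "ns i = (SOME n. linf_norm (\<lambda>n. T n (xs i)) = \<bar>T n (xs i)\<bar>)" for i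
    have ns: "linf_norm (\<lambda>n. T n (xs i)) = \<bar>T (ns i) (xs i)\<bar>" for i
      unfolding ns_def by (rule someI_ex) (rule linf_attain)
    have "\<bar>sqrt (\<Sum>i<k. \<bar>T (ns i) (xs i)\<bar>^2)\<bar> \<le> C * linf_norm (\<lambda>j. sqrt (\<Sum>i<k. \<bar>xs i j\<bar>^2))"
      using R[rule_format, of k "\<lambda>i. T (ns i)" xs] by auto
    then show "sqrt (\<Sum>n<k. (linf_norm ((\<lambda>x. \<lambda>n. T n x) (xs n)))^2) \<le> C * weak_l2 k xs"
      by (simp add: ns weak_l2_eq)
  next
    fix C and k :: nat and S and xs :: "nat \<Rightarrow> 'm \<Rightarrow> real"
    assume P: "\<forall>k (xs :: nat \<Rightarrow> 'm \<Rightarrow> real).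
       sqrt (\<Sum>n<k. (linf_norm ((\<lambda>x. \<lambda>n. T n x) (xs n)))^2) \<le> C * weak_l2 k xs"
      and S: "\<forall>i<k. S i \<in> range T"
    have le: "\<bar>S i (xs i)\<bar>^2 \<le> (linf_norm (\<lambda>n. T n (xs i)))^2" if ik: "i < k" for i
    proof -
      obtain n where "S i = T n" using S ik by auto
      then have "\<bar>S i (xs i)\<bar> \<le> linf_norm (\<lambda>n. T n (xs i))"
        using linf_ge[of "\<lambda>n. T n (xs i)" n] by simp
      then have "\<bar>S i (xs i)\<bar>^2 \<le> (linf_norm (\<lambda>n. T n (xs i)))^2" by (rule power_mono) simp
      then show ?thesis .
    qed
    have "\<bar>sqrt (\<Sum>i<k. \<bar>S i (xs i)\<bar>^2)\<bar> = sqrt (\<Sum>i<k. \<bar>S i (xs i)\<bar>^2)" by (simp add: sum_nonneg)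
    also have "\<dots> \<le> sqrt (\<Sum>n<k. (linf_norm ((\<lambda>x. \<lambda>n. T n x) (xs n)))^2)"
      using le by (auto intro!: sum_mono)
    also have "\<dots> \<le> C * weak_l2 k xs" using P by blast
    finally show "\<bar>sqrt (\<Sum>i<k. \<bar>S i (xs i)\<bar>^2)\<bar> \<le> C * linf_norm (\<lambda>j. sqrt (\<Sum>i<k. \<bar>xs i j\<bar>^2))"
      by (simp add: weak_l2_eq)
  qed
  then show ?thesis unfolding R2bound_def pi2_def by simp
qed

end
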